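(* Let $\psi\in\mathcal{B}_b(\mathbb{R}^2)$ be a bounded Borel function and $T>0$. Then for each $0<t<T$ there exists $C_{T,\psi}$ such that for each $x\in\mathbb{R}^2$ $$\sup_{0<\varepsilon<\frac12}\Big|\frac{-1}{\log\varepsilon}\int_{\mathbb{R}^2}\mathrm{d}z\int_0^t\mathrm{d}s\,\frac{1}{s+\varepsilon}p_{\frac{s+2\varepsilon}{2}}(z-x)\psi(z)\Big|\le C_{T,\psi},$$ and, for $0<t\le T$, $$\lim_{\varepsilon\to0}\frac{-1}{\log\varepsilon}\int_{\mathbb{R}^2}\mathrm{d}z\int_0^t\mathrm{d}s\,\frac{1}{s+\varepsilon}p_{\frac{s+\varepsilon}{2}}(z-x)\psi(z)=\psi(x)\quad\text{for a.e. }x\in\mathbb{R}^2.$$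
   Context: $p_t(x)=\frac{1}{2\pi t}\exp(-\frac{|x|^2}{2t})$ for $t>0$, $x\in\mathbb{R}^2$. *)

theory Defs
  imports "HOL-Analysis.Analysis"
begin

definition heat_kernel :: "real \<Rightarrow> real^2 \<Rightarrow> real" where
  "heat_kernel t x = 1 / (2 * pi * t) * exp (- (norm x)\<^sup>2 / (2 * t))"

end

theory Submission
  imports Defs "HOL-Probability.Probability"
begin

lemma hk_nonneg: "0 \<le> r \<Longrightarrow> 0 \<le> heat_kernel r x"
  by (simp add: heat_kernel_def)

lemma hk_meas[measurable (raw)]:
  "f \<in> borel_measurable M \<Longrightarrow> g \<in> M \<rightarrow>\<^sub>M borel \<Longrightarrow> (\<lambda>w. heat_kernel (f w) (g w)) \<in> borel_measurable M"
proof -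
  assume [measurable]: "f \<in> borel_measurable M" "g \<in> M \<rightarrow>\<^sub>M borel"
  have [measurable]: "(\<lambda>x. - (norm (g x))\<^sup>2 / (2 * f x)) \<in> borel_measurable M" by measurable
  have "(\<lambda>x. exp (- (norm (g x))\<^sup>2 / (2 * f x))) \<in> borel_measurable M"
    by (rule measurable_compose[OF _ borel_measurable_continuous_onI[OF continuous_on_exp[OF continuous_on_id]]]) simp
  then show ?thesis unfolding heat_kernel_def by measurable
qed

lemma hk_prod:
  fixes f :: "real^2 \<Rightarrow> real"
  assumes r: "r > 0"
  shows "heat_kernel r (\<Sum>b\<in>Basis. f b *\<^sub>R b) = (\<Prod>b\<in>Basis. normal_density 0 (sqrt r) (f b))"
proof -
  let ?v = "(\<Sum>b\<in>Basis. f b *\<^sub>R b)"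
  have "(norm ?v)\<^sup>2 = ?v \<bullet> ?v" by (simp add: power2_norm_eq_inner)
  also have "\<dots> = (\<Sum>b\<in>Basis. (f b)\<^sup>2)"
    by (subst euclidean_inner) (simp add: inner_sum_left_Basis power2_eq_square)
  finally have n: "(norm ?v)\<^sup>2 = (\<Sum>b\<in>Basis. (f b)\<^sup>2)" .
  have "(\<Prod>b\<in>Basis. normal_density 0 (sqrt r) (f b)) = (\<Prod>b\<in>(Basis::(real^2) set). 1 / sqrt (2*pi*r) * exp (- (f b)\<^sup>2 / (2*r)))"
    using r by (simp add: normal_density_def)
  also have "\<dots> = (1 / sqrt (2*pi*r)) ^ card (Basis::(real^2) set) * (\<Prod>b\<in>(Basis::(real^2) set). exp (- (f b)\<^sup>2 / (2*r)))"
    by (simp only: prod.distrib prod_constant)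
  also have "\<dots> = 1 / (2*pi*r) * exp (\<Sum>b\<in>(Basis::(real^2) set). - (f b)\<^sup>2 / (2*r))"
    using r by (simp add: exp_sum power2_eq_square[symmetric] real_sqrt_pow2 power_divide)
  also have "\<dots> = heat_kernel r ?v"
    unfolding heat_kernel_def n by (simp add: sum_divide_distrib[symmetric] sum_negf)
  finally show ?thesis by simp
qed

lemma hk_nn_integral0:
  assumes r: "r > 0"
  shows "(\<integral>\<^sup>+ z. ennreal (heat_kernel r z) \<partial>(lborel::(real^2) measure)) = 1"
proof -
  have "(\<integral>\<^sup>+ z. ennreal (heat_kernel r z) \<partial>(lborel::(real^2) measure)) =
     (\<integral>\<^sup>+ z. ennreal (heat_kernel r z) \<partial>(distr (\<Pi>\<^sub>M b\<in>Basis. lborel) borel (\<lambda>f. \<Sum>b\<in>Basis. f b *\<^sub>R b)))"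
    by (subst lborel_eq) simp
  also have "\<dots> = (\<integral>\<^sup>+ f. ennreal (heat_kernel r (\<Sum>b\<in>Basis. f b *\<^sub>R b)) \<partial>(\<Pi>\<^sub>M b\<in>Basis. lborel))"
    by (subst nn_integral_distr) auto
  also have "\<dots> = (\<integral>\<^sup>+ f. (\<Prod>b\<in>Basis. ennreal (normal_density 0 (sqrt r) (f b))) \<partial>(\<Pi>\<^sub>M b\<in>(Basis::(real^2) set). lborel))"
    using r by (simp add: hk_prod prod_ennreal)
  also have "\<dots> = (\<Prod>b\<in>(Basis::(real^2) set). (\<integral>\<^sup>+ y. ennreal (normal_density 0 (sqrt r) y) \<partial>lborel))"
    by (rule product_sigma_finite.product_nn_integral_prod) (auto simp: product_sigma_finite_def sigma_finite_lborel)
  also have "\<dots> = 1"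
  proof -
    have "(\<integral>\<^sup>+ y. ennreal (normal_density 0 (sqrt r) y) \<partial>lborel) = 1"
      using r by (subst nn_integral_eq_integral) (auto intro!: integrable_normal_density integral_normal_density)
    then show ?thesis by simp
  qed
  finally show ?thesis .
qed

definition flipc :: "(real^2 \<Rightarrow> real) \<Rightarrow> real^2 \<Rightarrow> real^2" where
  "flipc c y = (\<Sum>j\<in>Basis. (c j * (y \<bullet> j)) *\<^sub>R j)"

lemma flipc_id: "flipc (\<lambda>_. 1) y = y"
  by (simp add: flipc_def euclidean_representation)

lemma distr_affine_flipc:
  assumes c: "\<And>j. j \<in> Basis \<Longrightarrow> c j = 1 \<or> c j = -1"
  shows "distr lborel borel (\<lambda>y. x + flipc c y) = (lborel :: (real^2) measure)"
proof -
  have "(\<Prod>j\<in>(Basis::(real^2) set). \<bar>c j\<bar>) = 1"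
    by (rule prod.neutral) (use c in fastforce)
  moreover have "lborel = density (distr lborel borel (\<lambda>y. x + flipc c y)) (\<lambda>_. (\<Prod>j\<in>(Basis::(real^2) set). \<bar>c j\<bar>))"
    unfolding flipc_def
    by (rule lborel_affine_euclidean) (use c in force)
  ultimately show ?thesis by (simp add: density_1)
qed

lemma flipc_meas[measurable]: "flipc c \<in> borel_measurable borel"
  unfolding flipc_def by measurable

lemma nn_integral_affine_flipc:
  assumes c: "\<And>j. j \<in> Basis \<Longrightarrow> c j = 1 \<or> c j = -1"
    and f[measurable]: "f \<in> borel_measurable borel"
  shows "(\<integral>\<^sup>+ y. f (x + flipc c y) \<partial>lborel) = (\<integral>\<^sup>+ z. f z \<partial>(lborel :: (real^2) measure))"
proof -
  have "(\<integral>\<^sup>+ z. f z \<partial>(lborel :: (real^2) measure)) = (\<integral>\<^sup>+ z. f z \<partial>distr lborel borel (\<lambda>y. x + flipc c y))"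
    by (simp add: distr_affine_flipc[OF c])
  also have "\<dots> = (\<integral>\<^sup>+ y. f (x + flipc c y) \<partial>lborel)"
    by (subst nn_integral_distr) auto
  finally show ?thesis by simp
qed

lemma nn_integral_translate:
  assumes f[measurable]: "f \<in> borel_measurable borel"
  shows "(\<integral>\<^sup>+ y. f (x + y) \<partial>lborel) = (\<integral>\<^sup>+ z. f z \<partial>(lborel :: (real^2) measure))"
  using nn_integral_affine_flipc[of "\<lambda>_. 1" f x] by (simp add: flipc_id)

lemma hk_nn_integral:
  assumes r: "r > 0"
  shows "(\<integral>\<^sup>+ z. ennreal (heat_kernel r (z - x)) \<partial>lborel) = 1"
proof -
  have "(\<integral>\<^sup>+ z. ennreal (heat_kernel r (z - x)) \<partial>lborel) = (\<integral>\<^sup>+ y. ennreal (heat_kernel r ((x + y) - x)) \<partial>lborel)"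
    by (rule nn_integral_translate[symmetric]) measurable
  then show ?thesis using hk_nn_integral0[OF r] by simp
qed

lemma hk_integrable: "r > 0 \<Longrightarrow> integrable lborel (\<lambda>z. heat_kernel r (z - x))"
  by (rule integrableI_nonneg) (auto simp: hk_nonneg hk_nn_integral)

lemma hk_integral: "r > 0 \<Longrightarrow> (\<integral>z. heat_kernel r (z - x) \<partial>lborel) = 1"
  using nn_integral_eq_integral[OF hk_integrable, of r x] hk_nn_integral[of r x]
  by (simp add: hk_nonneg)

lemma hk_g_integrable:
  assumes r: "r > 0" and g[measurable]: "g \<in> borel_measurable borel" and B: "\<And>z. \<bar>g z\<bar> \<le> B"
  shows "integrable lborel (\<lambda>z. heat_kernel r (z - x) * g z)"
proof (rule Bochner_Integration.integrable_bound[where f="\<lambda>z. B * heat_kernel r (z - x)"])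
  show "integrable lborel (\<lambda>z. B * heat_kernel r (z - x))" using r by (auto intro!: hk_integrable)
  have "heat_kernel r (z - x) * \<bar>g z\<bar> \<le> \<bar>B\<bar> * heat_kernel r (z - x)" for z
  proof -
    have "\<bar>g z\<bar> * heat_kernel r (z - x) \<le> B * heat_kernel r (z - x)"
      using B[of z] hk_nonneg[of r "z - x"] r by (intro mult_right_mono) auto
    also have "\<dots> \<le> \<bar>B\<bar> * heat_kernel r (z - x)"
      using hk_nonneg[of r "z - x"] r by (intro mult_right_mono) auto
    finally show ?thesis by (simp add: mult.commute)
  qed
  then show "AE z in lborel. norm (heat_kernel r (z - x) * g z) \<le> norm (B * heat_kernel r (z - x))"
    using r by (auto simp: abs_mult hk_nonneg)
qed measurable

lemma hk_g_bound:
  assumes r: "r > 0" and g[measurable]: "g \<in> borel_measurable borel" and B: "\<And>z. \<bar>g z\<bar> \<le> B"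
  shows "\<bar>\<integral>z. heat_kernel r (z - x) * g z \<partial>lborel\<bar> \<le> B"
proof -
  have "\<bar>\<integral>z. heat_kernel r (z - x) * g z \<partial>lborel\<bar> \<le> (\<integral>z. \<bar>heat_kernel r (z - x) * g z\<bar> \<partial>lborel)"
    by (rule integral_abs_bound)
  also have "\<dots> \<le> (\<integral>z. B * heat_kernel r (z - x) \<partial>lborel)"
    using r B by (intro integral_mono hk_g_integrable integrable_abs) (auto intro!: hk_integrable mult_right_mono simp: abs_mult hk_nonneg mult.commute)
  also have "\<dots> = B" using hk_integral[OF r] by simp
  finally show ?thesis .
qed

lemma fubini_G:
  fixes g :: "real^2 \<Rightarrow> real" and k \<rho> :: "real \<Rightarrow> real"
  assumes g[measurable]: "g \<in> borel_measurable borel" and B: "\<And>z. \<bar>g z\<bar> \<le> B"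
    and k[measurable]: "k \<in> borel_measurable borel"
    and kint: "set_integrable lborel {0..t} k"
    and \<rho>[measurable]: "\<rho> \<in> borel_measurable borel"
    and \<rho>pos: "\<And>s. s \<in> {0..t} \<Longrightarrow> 0 < \<rho> s"
  shows "(\<integral>z. (\<integral>s\<in>{0..t}. k s * heat_kernel (\<rho> s) (z - x) * g z \<partial>lborel) \<partial>lborel)
       = (\<integral>s\<in>{0..t}. k s * (\<integral>z. heat_kernel (\<rho> s) (z - x) * g z \<partial>lborel) \<partial>lborel)"
proof -
  define F where "F z s = indicator {0..t} s *\<^sub>R (k s * heat_kernel (\<rho> s) (z - x) * g z)" for z s
  have Fm[measurable]: "case_prod F \<in> borel_measurable (lborel \<Otimes>\<^sub>M lborel)"
    unfolding F_def by measurable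
  have B0: "0 \<le> B" using B[of 0] by simp
  have inner: "(\<integral>\<^sup>+ z. ennreal (norm (F z s)) \<partial>lborel) \<le> ennreal (B * (indicator {0..t} s * \<bar>k s\<bar>))" for s
  proof (cases "s \<in> {0..t}")
    case True
    have "(\<integral>\<^sup>+ z. ennreal (norm (F z s)) \<partial>lborel) \<le> (\<integral>\<^sup>+ z. ennreal (B * \<bar>k s\<bar>) * ennreal (heat_kernel (\<rho> s) (z - x)) \<partial>lborel)"
    proof (rule nn_integral_mono)
      fix z
      have "norm (F z s) = \<bar>k s\<bar> * heat_kernel (\<rho> s) (z - x) * \<bar>g z\<bar>"
        using True \<rho>pos[OF True] by (simp add: F_def abs_mult hk_nonneg)
      also have "\<dots> \<le> \<bar>k s\<bar> * heat_kernel (\<rho> s) (z - x) * B"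
        using True \<rho>pos[OF True] B[of z] by (intro mult_left_mono) (auto simp: hk_nonneg)
      finally show "ennreal (norm (F z s)) \<le> ennreal (B * \<bar>k s\<bar>) * ennreal (heat_kernel (\<rho> s) (z - x))"
        using B0 by (simp add: ennreal_mult'[symmetric] mult_ac)
    qed
    also have "\<dots> = ennreal (B * \<bar>k s\<bar>)"
      by (simp add: nn_integral_cmult hk_nn_integral \<rho>pos[OF True])
    finally show ?thesis using True by simp
  next
    case False
    then show ?thesis by (simp add: F_def)
  qed
  have "integrable (lborel \<Otimes>\<^sub>M lborel) (case_prod F)"
  proof (rule integrableI_bounded)
    have "(\<integral>\<^sup>+ p. ennreal (norm (case_prod F p)) \<partial>(lborel \<Otimes>\<^sub>M lborel)) = (\<integral>\<^sup>+ s. (\<integral>\<^sup>+ z. ennreal (norm (F z s)) \<partial>lborel) \<partial>lborel)"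
      by (subst lborel_pair.nn_integral_snd[symmetric]) auto
    also have "\<dots> \<le> (\<integral>\<^sup>+ s. ennreal (B * (indicator {0..t} s * \<bar>k s\<bar>)) \<partial>lborel)"
      by (rule nn_integral_mono) (rule inner)
    also have "\<dots> = ennreal B * (\<integral>\<^sup>+ s. ennreal (norm (indicator {0..t} s *\<^sub>R k s)) \<partial>lborel)"
      using B0 by (subst nn_integral_cmult[symmetric]) (auto intro!: nn_integral_cong simp: ennreal_mult indicator_def)
    also have "\<dots> < \<infinity>"
      using kint unfolding set_integrable_def integrable_iff_bounded
      by (simp add: ennreal_mult_less_top)
    finally show "(\<integral>\<^sup>+ p. ennreal (norm (case_prod F p)) \<partial>(lborel \<Otimes>\<^sub>M lborel)) < \<infinity>" .
  qed simp
  then have fub: "(\<integral>s. (\<integral>z. F z s \<partial>lborel) \<partial>lborel) = (\<integral>z. (\<integral>s. F z s \<partial>lborel) \<partial>lborel)"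
    by (rule lborel_pair.Fubini_integral)
  have ps: "(\<integral>z. F z s \<partial>lborel) = indicator {0..t} s *\<^sub>R (k s * (\<integral>z. heat_kernel (\<rho> s) (z - x) * g z \<partial>lborel))" for s
  proof -
    have "(\<integral>z. F z s \<partial>lborel) = (\<integral>z. (indicator {0..t} s * k s) * (heat_kernel (\<rho> s) (z - x) * g z) \<partial>lborel)"
      unfolding F_def by (simp add: mult_ac)
    also have "\<dots> = (indicator {0..t} s * k s) * (\<integral>z. heat_kernel (\<rho> s) (z - x) * g z \<partial>lborel)"
      by (rule integral_mult_right_zero)
    finally show ?thesis by simp
  qed
  have "(\<integral>z. (\<integral>s\<in>{0..t}. k s * heat_kernel (\<rho> s) (z - x) * g z \<partial>lborel) \<partial>lborel) = (\<integral>z. (\<integral>s. F z s \<partial>lborel) \<partial>lborel)"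
    unfolding set_lebesgue_integral_def F_def ..
  also have "\<dots> = (\<integral>s. (\<integral>z. F z s \<partial>lborel) \<partial>lborel)" using fub by simp
  also have "\<dots> = (\<integral>s\<in>{0..t}. k s * (\<integral>z. heat_kernel (\<rho> s) (z - x) * g z \<partial>lborel) \<partial>lborel)"
    unfolding set_lebesgue_integral_def ps ..
  finally show ?thesis .
qed

lemma set_int_bound:
  fixes f b :: "real \<Rightarrow> real"
  assumes f[measurable]: "f \<in> borel_measurable borel" and b: "set_integrable lborel {0..t} b"
    and le: "\<And>s. s \<in> {0..t} \<Longrightarrow> \<bar>f s\<bar> \<le> b s"
  shows "set_integrable lborel {0..t} f" "\<bar>\<integral>s\<in>{0..t}. f s \<partial>lborel\<bar> \<le> (\<integral>s\<in>{0..t}. b s \<partial>lborel)"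
proof -
  show fi: "set_integrable lborel {0..t} f"
    unfolding set_integrable_def
    by (rule Bochner_Integration.integrable_bound[OF b[unfolded set_integrable_def]])
       (use le in \<open>auto simp: indicator_def intro: order_trans[OF _ abs_ge_self]\<close>)
  have "\<bar>\<integral>s\<in>{0..t}. f s \<partial>lborel\<bar> \<le> (\<integral>s. \<bar>indicator {0..t} s * f s\<bar> \<partial>lborel)"
    unfolding set_lebesgue_integral_def by (simp add: integral_abs_bound)
  also have "\<dots> \<le> (\<integral>s\<in>{0..t}. b s \<partial>lborel)"
    unfolding set_lebesgue_integral_def
    using set_integrable_abs[OF fi] b le unfolding set_integrable_def
    by (intro integral_mono) (auto simp: indicator_def abs_mult)
  finally show "\<bar>\<integral>s\<in>{0..t}. f s \<partial>lborel\<bar> \<le> (\<integral>s\<in>{0..t}. b s \<partial>lborel)" .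
qed

lemma k_integrable:
  fixes t :: real
  assumes e: "e > 0"
  shows "set_integrable lborel {0..t} (\<lambda>s. 1 / (s + e))"
  unfolding set_integrable_def
proof (rule borel_integrable_compact)
  show "continuous_on {0..t} (\<lambda>s. 1 / (s + e))"
    by (rule continuous_on_divide) (use e in \<open>auto intro!: continuous_intros\<close>)
qed auto

lemma const_integrable: "set_integrable lborel {0..(t::real)} (\<lambda>s. c::real)" 
  unfolding set_integrable_def
  by (rule borel_integrable_compact) auto

lemma const_integral: "0 \<le> t \<Longrightarrow> (\<integral>s\<in>{0..t}. (c::real) \<partial>lborel) = t * c"
  by (simp add: set_integral_const)

lemma k_integral:
  fixes t :: real
  assumes e: "e > 0" and t: "0 \<le> t"
  shows "(\<integral>s\<in>{0..t}. 1 / (s + e) \<partial>lborel) = ln (t + e) - ln e"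
proof -
  have "(\<integral>s\<in>{0..t}. 1 / (s + e) \<partial>lborel) = (LBINT s=ereal 0..ereal t. 1 / (s + e))"
    using t by (simp add: interval_integral_Icc)
  also have "\<dots> = ln (t + e) - ln (0 + e)"
    by (rule interval_integral_FTC_finite)
       (use e t in \<open>auto intro!: continuous_intros derivative_eq_intros simp: has_real_derivative_iff_has_vector_derivative[symmetric]\<close>)
  finally show ?thesis by simp
qed

lemma P_meas[measurable]:
  assumes [measurable]: "g \<in> borel_measurable borel" "\<rho> \<in> borel_measurable borel"
  shows "(\<lambda>s. \<integral>z. heat_kernel (\<rho> s) (z - x) * g z \<partial>lborel) \<in> borel_measurable (borel :: real measure)"
  by measurable

lemma I_eq:
  fixes \<psi> :: "real^2 \<Rightarrow> real" and t e :: real and \<rho> :: "real \<Rightarrow> real"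
  assumes meas[measurable]: "\<psi> \<in> borel_measurable borel" and M: "\<And>z. \<bar>\<psi> z\<bar> \<le> M"
    and e: "e > 0" and \<rho>[measurable]: "\<rho> \<in> borel_measurable borel" and \<rho>pos: "\<And>s. s \<in> {0..t} \<Longrightarrow> 0 < \<rho> s"
  shows "(\<integral>z. (\<integral>s\<in>{0..t}. 1 / (s + e) * heat_kernel (\<rho> s) (z - x) * \<psi> z \<partial>lborel) \<partial>lborel)
     = (\<integral>s\<in>{0..t}. 1 / (s + e) * (\<integral>z. heat_kernel (\<rho> s) (z - x) * \<psi> z \<partial>lborel) \<partial>lborel)"
  by (rule fubini_G[where k="\<lambda>s. 1 / (s + e)", OF meas M _ k_integrable[OF e] \<rho> \<rho>pos]) auto

lemma I_bound:
  fixes \<psi> :: "real^2 \<Rightarrow> real" and t e :: real and \<rho> :: "real \<Rightarrow> real"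
  assumes meas[measurable]: "\<psi> \<in> borel_measurable borel" and M: "\<And>z. \<bar>\<psi> z\<bar> \<le> M"
    and e: "e > 0" and t: "t \<ge> 0" and \<rho>[measurable]: "\<rho> \<in> borel_measurable borel" and \<rho>pos: "\<And>s. s \<in> {0..t} \<Longrightarrow> 0 < \<rho> s"
  shows "\<bar>\<integral>z. (\<integral>s\<in>{0..t}. 1 / (s + e) * heat_kernel (\<rho> s) (z - x) * \<psi> z \<partial>lborel) \<partial>lborel\<bar>
          \<le> M * (ln (t + e) - ln e)"
proof -
  have "\<bar>\<integral>s\<in>{0..t}. 1 / (s + e) * (\<integral>z. heat_kernel (\<rho> s) (z - x) * \<psi> z \<partial>lborel) \<partial>lborel\<bar>
      \<le> (\<integral>s\<in>{0..t}. M * (1 / (s + e)) \<partial>lborel)"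
  proof (rule set_int_bound(2))
    show "set_integrable lborel {0..t} (\<lambda>s. M * (1 / (s + e)))"
      using k_integrable[OF e] by (rule set_integrable_mult_right)
    fix s assume s: "s \<in> {0..t}"
    have "\<bar>1 / (s + e) * (\<integral>z. heat_kernel (\<rho> s) (z - x) * \<psi> z \<partial>lborel)\<bar>
        = (1 / (s + e)) * \<bar>\<integral>z. heat_kernel (\<rho> s) (z - x) * \<psi> z \<partial>lborel\<bar>"
      using s e by (simp add: abs_mult)
    also have "\<dots> \<le> (1 / (s + e)) * M"
      using s e by (intro mult_left_mono hk_g_bound[OF \<rho>pos[OF s] meas M]) auto
    finally show "\<bar>1 / (s + e) * (\<integral>z. heat_kernel (\<rho> s) (z - x) * \<psi> z \<partial>lborel)\<bar> \<le> M * (1 / (s + e))"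
      by (simp add: mult.commute)
  qed measurable
  also have "\<dots> = M * (\<integral>s\<in>{0..t}. 1 / (s + e) \<partial>lborel)"
    by (rule set_integral_mult_right)
  also have "\<dots> = M * (ln (t + e) - ln e)"
    using k_integral[OF e t] by simp
  finally show ?thesis using I_eq[OF meas M e \<rho> \<rho>pos] by simp
qed

lemma part1:
  fixes \<psi> :: "real^2 \<Rightarrow> real" and T t :: real
  assumes meas[measurable]: "\<psi> \<in> borel_measurable borel" and M: "\<And>z. \<bar>\<psi> z\<bar> \<le> M"
    and t: "0 < t" "t < T"
  shows "\<exists>C. \<forall>x::real^2. \<forall>\<epsilon>::real. 0 < \<epsilon> \<and> \<epsilon> < 1/2 \<longrightarrow>
               \<bar>(-1 / ln \<epsilon>) * (\<integral>z. (\<integral>s\<in>{0..t}. 1 / (s + \<epsilon>) *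
                    heat_kernel ((s + 2 * \<epsilon>) / 2) (z - x) * \<psi> z \<partial>lborel) \<partial>lborel)\<bar> \<le> C"
proof (intro exI allI impI)
  fix x :: "real^2" and e :: real
  assume e: "0 < e \<and> e < 1/2"
  have M0: "0 \<le> M" using M[of 0] by simp
  have ln2: "ln 2 > (0::real)" by simp
  have le: "-ln e \<ge> ln 2"
  proof -
    have "ln 2 \<le> ln (1 / e)" using e by (subst ln_le_cancel_iff) (auto simp: field_simps)
    also have "ln (1 / e) = - ln e" using e by (simp add: ln_div)
    finally show ?thesis .
  qed
  show "\<bar>(-1 / ln e) * (\<integral>z. (\<integral>s\<in>{0..t}. 1 / (s + e) *
                    heat_kernel ((s + 2 * e) / 2) (z - x) * \<psi> z \<partial>lborel) \<partial>lborel)\<bar> \<le> M * (1 + T / ln 2)"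
  proof -
    let ?I = "(\<integral>z. (\<integral>s\<in>{0..t}. 1 / (s + e) * heat_kernel ((s + 2 * e) / 2) (z - x) * \<psi> z \<partial>lborel) \<partial>lborel)"
    have Ib: "\<bar>?I\<bar> \<le> M * (ln (t + e) - ln e)"
      by (rule I_bound[OF meas M]) (use e t in auto)
    have lnpos: "-ln e > 0" using ln2 le by linarith
    have "\<bar>(-1 / ln e) * ?I\<bar> = \<bar>?I\<bar> / (-ln e)"
      using lnpos by (simp add: abs_mult abs_div)
    also have "\<dots> \<le> M * (ln (t + e) - ln e) / (-ln e)"
      using Ib lnpos by (intro divide_right_mono) auto
    also have "\<dots> = M * (1 + ln (t + e) / (-ln e))"
      using lnpos by (simp add: field_simps)
    also have "\<dots> \<le> M * (1 + T / ln 2)"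
    proof (rule mult_left_mono[OF _ M0])
      have "ln (t + e) / (-ln e) \<le> T / ln 2"
      proof (cases "ln (t + e) \<le> 0")
        case True
        then have "ln (t + e) / (-ln e) \<le> 0" using lnpos by (intro divide_nonpos_pos) auto
        also have "0 \<le> T / ln 2" using t ln2 by simp
        finally show ?thesis .
      next
        case False
        have "ln (t + e) \<le> t + e - 1" using e t by (intro ln_le_minus_one) auto
        then have lt: "ln (t + e) \<le> T" using e t by linarith
        have "ln (t + e) / (-ln e) \<le> T / (-ln e)" using lt lnpos by (intro divide_right_mono) auto
        also have "\<dots> \<le> T / ln 2" using le ln2 t lnpos by (intro divide_left_mono) (auto simp: mult_neg_pos)
        finally show ?thesis .
      qed
      then show "1 + ln (t + e) / (-ln e) \<le> 1 + T / ln 2" by simp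
    qed
    finally show ?thesis .
  qed
qed

lemma bdd_integrable_on_cbox:
  fixes f :: "real^2 \<Rightarrow> real"
  assumes f[measurable]: "f \<in> borel_measurable borel" and B: "\<And>z. \<bar>f z\<bar> \<le> B"
  shows "f integrable_on cbox a b" "integrable lborel (\<lambda>x. indicator (cbox a b) x * f x)"
proof -
  show i: "integrable lborel (\<lambda>x. indicator (cbox a b) x * f x)"
  proof (rule Bochner_Integration.integrable_bound[where f="\<lambda>x. B * indicator (cbox a b) x"])
    show "integrable lborel (\<lambda>x. B * indicator (cbox a b) x)"
      by (intro integrable_mult_right integrable_real_indicator) (auto simp: emeasure_lborel_cbox_eq)
    show "AE x in lborel. norm (indicator (cbox a b) x * f x) \<le> norm (B * indicator (cbox a b) x)"
      using B by (auto simp: indicator_def intro: order_trans[OF _ abs_ge_self])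
  qed measurable
  have "(\<lambda>x. if x \<in> cbox a b then f x else 0) integrable_on UNIV"
  proof -
    have "(\<lambda>x. indicator (cbox a b) x * f x) = (\<lambda>x. if x \<in> cbox a b then f x else 0)"
      by (auto simp: indicator_def)
    then show ?thesis using integrable_on_lborel[OF i] by simp
  qed
  then show "f integrable_on cbox a b"
    by (simp add: integrable_restrict_UNIV)
qed

lemma cbox_emeasure: "h \<ge> 0 \<Longrightarrow> emeasure lborel (cbox w (w + h *\<^sub>R One :: real^2)) = ennreal (h\<^sup>2)"
  by (simp add: emeasure_lborel_cbox_eq inner_simps power2_eq_square)

lemma corner_leb:
  fixes \<Psi> :: "real^2 \<Rightarrow> real"
  assumes meas[measurable]: "\<Psi> \<in> borel_measurable borel" and M: "\<And>z. \<bar>\<Psi> z\<bar> \<le> M"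
  obtains N where "N \<in> null_sets lborel"
    "\<And>w \<eta>. w \<notin> N \<Longrightarrow> \<eta> > 0 \<Longrightarrow> \<exists>h0>0. \<forall>h. 0 < h \<and> h < h0 \<longrightarrow>
        (\<integral>\<^sup>+y. ennreal \<bar>\<Psi> y - \<Psi> w\<bar> * indicator (cbox w (w + h *\<^sub>R One)) y \<partial>lborel) \<le> ennreal (\<eta> * h\<^sup>2)"
proof -
  define f where "f q y = \<bar>\<Psi> y - real_of_rat q\<bar>" for q y
  have fm[measurable]: "f q \<in> borel_measurable borel" for q unfolding f_def by measurable
  have f0: "0 \<le> f q y" for q y by (simp add: f_def)
  have fB: "\<bar>f q y\<bar> \<le> M + \<bar>real_of_rat q\<bar>" for q y
    using M[of y] abs_triangle_ineq4[of "\<Psi> y" "real_of_rat q"] unfolding f_def by linarith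
  have "\<exists>N. negligible N \<and> (\<forall>x e. x \<notin> N \<and> 0 < e \<longrightarrow> (\<exists>d>0. \<forall>h. 0 < h \<and> h < d \<longrightarrow>
               norm (integral (cbox x (x + h *\<^sub>R One)) (f q) /\<^sub>R h ^ DIM(real^2) - f q x) < e))" for q
  proof -
    obtain N where "negligible N" "\<And>x e. \<lbrakk>x \<notin> N; 0 < e\<rbrakk> \<Longrightarrow>
               \<exists>d>0. \<forall>h. 0 < h \<and> h < d \<longrightarrow>
                         norm(integral (cbox x (x + h *\<^sub>R One)) (f q) /\<^sub>R h ^ DIM(real^2) - f q x) < e"
      by (rule integrable_ccontinuous_explicit[of "f q", OF bdd_integrable_on_cbox(1)[OF fm fB]]) blast
    then show ?thesis by blast
  qed
  then obtain Nq where Nq: "\<And>q. negligible (Nq q)" and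
    Nq2: "\<And>q x e. x \<notin> Nq q \<Longrightarrow> 0 < e \<Longrightarrow> \<exists>d>0. \<forall>h. 0 < h \<and> h < d \<longrightarrow>
               norm (integral (cbox x (x + h *\<^sub>R One)) (f q) /\<^sub>R h ^ DIM(real^2) - f q x) < e"
    by metis
  have "negligible (\<Union>q. Nq q)"
    by (rule negligible_countable_Union) (auto simp: Nq)
  then have "(\<Union>q. Nq q) \<in> null_sets (completion lborel)"
    by (simp add: negligible_iff_null_sets)
  then obtain N where N: "N \<in> null_sets lborel" "(\<Union>q. Nq q) \<subseteq> N"
    by (auto simp: null_sets_completion_iff2)
  show ?thesis
  proof (rule that[OF N(1)])
    fix w and \<eta> :: real
    assume w: "w \<notin> N" and \<eta>: "\<eta> > 0"
    obtain q where q: "\<bar>\<Psi> w - real_of_rat q\<bar> < \<eta> / 4"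
    proof -
      obtain r where "r \<in> \<rat>" "\<Psi> w - \<eta>/4 < r" "r < \<Psi> w + \<eta>/4"
        using Rats_dense_in_real[of "\<Psi> w - \<eta>/4" "\<Psi> w + \<eta>/4"] \<eta> by auto
      then obtain q0 where "\<Psi> w - \<eta>/4 < real_of_rat q0" "real_of_rat q0 < \<Psi> w + \<eta>/4"
        by (auto simp: Rats_def)
      then have "\<bar>\<Psi> w - real_of_rat q0\<bar> < \<eta> / 4" by linarith
      then show ?thesis by (rule that)
    qed
    have "w \<notin> Nq q" using w N(2) by auto
    from Nq2[OF this, of "\<eta>/4"] \<eta> obtain d where d: "d > 0"
      "\<And>h. 0 < h \<and> h < d \<Longrightarrow> norm (integral (cbox w (w + h *\<^sub>R One)) (f q) /\<^sub>R h ^ DIM(real^2) - f q w) < \<eta>/4"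
      by auto
    show "\<exists>h0>0. \<forall>h. 0 < h \<and> h < h0 \<longrightarrow>
        (\<integral>\<^sup>+y. ennreal \<bar>\<Psi> y - \<Psi> w\<bar> * indicator (cbox w (w + h *\<^sub>R One)) y \<partial>lborel) \<le> ennreal (\<eta> * h\<^sup>2)"
    proof (intro exI conjI allI impI)
      fix h assume h: "0 < h \<and> h < d"
      let ?C = "cbox w (w + h *\<^sub>R One)"
      let ?I = "integral ?C (f q)"
      have "norm (?I /\<^sub>R h ^ DIM(real^2) - f q w) < \<eta>/4" using d(2)[OF h] by blast
      moreover have "?I /\<^sub>R h ^ DIM(real^2) = ?I / h\<^sup>2" by (simp add: divide_inverse mult.commute)
      ultimately have a: "\<bar>?I / h\<^sup>2 - f q w\<bar> < \<eta>/4" by simp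
      moreover have "f q w < \<eta>/4" using q by (simp add: f_def abs_minus_commute)
      ultimately have "?I / h\<^sup>2 < \<eta> / 2" by linarith
      then have Ile: "?I \<le> \<eta> / 2 * h\<^sup>2" using h by (simp add: field_simps)
      have Inn: "(\<integral>\<^sup>+y. ennreal (f q y) * indicator ?C y \<partial>lborel) = ennreal ?I"
        by (rule nn_integral_has_integral_lebesgue') (auto simp: f0 intro!: integrable_integral bdd_integrable_on_cbox[OF fm fB])
      have "(\<integral>\<^sup>+y. ennreal \<bar>\<Psi> y - \<Psi> w\<bar> * indicator ?C y \<partial>lborel)
          \<le> (\<integral>\<^sup>+y. (ennreal (f q y) + ennreal (\<eta>/4)) * indicator ?C y \<partial>lborel)"
      proof (rule nn_integral_mono)
        fix y
        have "\<bar>\<Psi> y - \<Psi> w\<bar> \<le> f q y + \<eta>/4" using q unfolding f_def by linarith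
        then have "ennreal \<bar>\<Psi> y - \<Psi> w\<bar> \<le> ennreal (f q y) + ennreal (\<eta>/4)"
          using \<eta> by (simp add: f_def ennreal_plus[symmetric] del: ennreal_plus)
        then show "ennreal \<bar>\<Psi> y - \<Psi> w\<bar> * indicator ?C y \<le> (ennreal (f q y) + ennreal (\<eta>/4)) * indicator ?C y"
          by (auto simp: indicator_def)
      qed
      also have "\<dots> = (\<integral>\<^sup>+y. ennreal (f q y) * indicator ?C y \<partial>lborel) + ennreal (\<eta>/4) * emeasure lborel ?C"
        by (simp add: distrib_right nn_integral_add nn_integral_cmult_indicator)
      also have "\<dots> = ennreal ?I + ennreal (\<eta>/4 * h\<^sup>2)"
        using h \<eta> by (simp add: Inn cbox_emeasure ennreal_mult'[symmetric])
      also have "\<dots> = ennreal (?I + \<eta>/4 * h\<^sup>2)"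
        using h \<eta> by (intro ennreal_plus[symmetric]) (auto simp: f_def intro!: integral_nonneg bdd_integrable_on_cbox[OF fm fB])
      also have "\<dots> \<le> ennreal (\<eta> * h\<^sup>2)"
      proof (intro ennreal_leI)
        have "0 \<le> \<eta> * h\<^sup>2" using \<eta> by simp
        then show "?I + \<eta>/4 * h\<^sup>2 \<le> \<eta> * h\<^sup>2" using Ile by linarith
      qed
      finally show "(\<integral>\<^sup>+y. ennreal \<bar>\<Psi> y - \<Psi> w\<bar> * indicator ?C y \<partial>lborel) \<le> ennreal (\<eta> * h\<^sup>2)" .
    qed (use d in auto)
  qed
qed

definition cc :: "nat \<Rightarrow> real" where "cc k = (real k + 1)\<^sup>2 * exp (- (real k)\<^sup>2 / 2)"

lemma cc_nonneg: "0 \<le> cc k" by (simp add: cc_def)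

lemma cc_le:
  fixes k :: nat assumes k: "1 \<le> k"
  shows "cc k \<le> 32 * inverse (real k ^ 2)"
proof -
  define u where "u = (real k)\<^sup>2 / 2"
  have t: "1 + u + u\<^sup>2 / 2 \<le> exp u" unfolding u_def by (rule exp_lower_Taylor_quadratic) simp
  have "u\<^sup>2 = (real k)^4 / 4" unfolding u_def by (simp add: power_divide flip: power_mult)
  moreover have "0 \<le> u" unfolding u_def by simp
  ultimately have e: "(real k)^4 / 8 \<le> exp u" using t by linarith
  have "(real k + 1)\<^sup>2 \<le> (2 * real k)\<^sup>2" using k by (intro power_mono) auto
  then have kk: "(real k + 1)\<^sup>2 \<le> 4 * (real k)\<^sup>2" by (simp add: power_mult_distrib)
  have kpos: "real k > 0" using k by simp
  have "cc k = (real k + 1)\<^sup>2 / exp u"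
    unfolding cc_def u_def by (simp add: exp_minus field_simps)
  also have "\<dots> \<le> 4 * (real k)\<^sup>2 / ((real k)^4 / 8)"
    by (rule frac_le) (use kk e kpos in auto)
  also have "\<dots> = 32 * inverse (real k ^ 2)"
    using kpos by (simp add: field_simps power2_eq_square power4_eq_xxxx)
  finally show ?thesis .
qed

lemma cc_summable: "summable cc"
  by (rule summable_comparison_test'[where N=1 and g="\<lambda>k::nat. 32 * inverse (real k ^ 2)"])
     (auto intro!: summable_mult inverse_power_summable simp: cc_nonneg cc_le)

definition Qd :: "(real^2) set" where "Qd = {y. \<forall>j\<in>Basis. 0 \<le> y \<bullet> j}"

lemma Qd_meas[measurable]: "Qd \<in> sets borel"
  unfolding Qd_def by measurable

lemma kernel_pointwise:
  fixes y :: "real^2" assumes r: "r > 0" and y: "y \<in> Qd"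
  obtains k :: nat where "y \<in> cbox 0 (((real k + 1) * sqrt r) *\<^sub>R One)"
    "heat_kernel r y \<le> 1 / (2 * pi * r) * exp (- (real k)\<^sup>2 / 2)"
proof -
  define k where "k = nat \<lfloor>norm y / sqrt r\<rfloor>"
  have sr: "sqrt r > 0" using r by simp
  have k1: "norm y / sqrt r < real k + 1" unfolding k_def by linarith
  have k2: "real k \<le> norm y / sqrt r" unfolding k_def using sr by (simp add: floor_le_iff)
  have k0: "0 \<le> real k" by simp
  have "norm y < (real k + 1) * sqrt r" using k1 sr by (simp add: field_simps)
  then have "y \<in> cbox 0 (((real k + 1) * sqrt r) *\<^sub>R One)"
    using y unfolding Qd_def mem_box
    by (auto simp: inner_simps intro: order_trans[OF Basis_le_norm] less_imp_le  dest: order.strict_trans1[OF Basis_le_norm])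
  moreover
  have "real k * sqrt r \<le> norm y" using k2 sr by (simp add: field_simps)
  then have "(real k * sqrt r)\<^sup>2 \<le> (norm y)\<^sup>2" using k0 sr by (intro power_mono) auto
  then have "(real k)\<^sup>2 * r \<le> (norm y)\<^sup>2" using r by (simp add: power_mult_distrib)
  then have "- (norm y)\<^sup>2 / (2 * r) \<le> - (real k)\<^sup>2 / 2" using r by (simp add: field_simps)
  then have "heat_kernel r y \<le> 1 / (2 * pi * r) * exp (- (real k)\<^sup>2 / 2)"
    unfolding heat_kernel_def using r by (intro mult_left_mono) auto
  ultimately show ?thesis by (rule that)
qed

lemma translate_cube:
  fixes G :: "real^2 \<Rightarrow> real"
  assumes [measurable]: "G \<in> borel_measurable borel"
  shows "(\<integral>\<^sup>+y. indicator (cbox 0 (h *\<^sub>R One)) y * ennreal (G (w + y)) \<partial>lborel)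
       = (\<integral>\<^sup>+z. ennreal (G z) * indicator (cbox w (w + h *\<^sub>R One)) z \<partial>lborel)"
proof -
  have "(\<integral>\<^sup>+z. ennreal (G z) * indicator (cbox w (w + h *\<^sub>R One)) z \<partial>lborel)
     = (\<integral>\<^sup>+y. ennreal (G (w + y)) * indicator (cbox w (w + h *\<^sub>R One)) (w + y) \<partial>lborel)"
    by (rule nn_integral_translate[symmetric]) measurable
  also have "\<dots> = (\<integral>\<^sup>+y. indicator (cbox 0 (h *\<^sub>R One)) y * ennreal (G (w + y)) \<partial>lborel)"
    by (rule nn_integral_cong) (auto simp: indicator_def mem_box inner_simps mult.commute)
  finally show ?thesis by simp
qed

lemma kernel_bound:
  fixes G :: "real^2 \<Rightarrow> real" and w :: "real^2" and \<eta> B :: real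
  assumes Gm[measurable]: "G \<in> borel_measurable borel" and G0: "\<And>y. 0 \<le> G y" and GB: "\<And>y. G y \<le> B"
    and leb: "\<And>\<eta>. \<eta> > 0 \<Longrightarrow> \<exists>h0>0. \<forall>h. 0 < h \<and> h < h0 \<longrightarrow>
        (\<integral>\<^sup>+y. ennreal (G y) * indicator (cbox w (w + h *\<^sub>R One)) y \<partial>lborel) \<le> ennreal (\<eta> * h\<^sup>2)"
    and \<eta>: "\<eta> > 0"
  shows "\<exists>\<delta>>0. \<forall>r. 0 < r \<and> r < \<delta> \<longrightarrow>
     (\<integral>\<^sup>+y. ennreal (heat_kernel r y) * indicator Qd y * ennreal (G (w + y)) \<partial>lborel) \<le> ennreal \<eta>"
proof -
  have B0: "0 \<le> B" using G0[of 0] GB[of 0] by simp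
  define S where "S = suminf cc"
  have S0: "0 \<le> S" unfolding S_def by (rule suminf_nonneg[OF cc_summable cc_nonneg])
  define \<eta>1 where "\<eta>1 = \<eta> / (2 * (S + 1))"
  have \<eta>1: "\<eta>1 > 0" unfolding \<eta>1_def using \<eta> S0 by simp
  have \<eta>1S: "\<eta>1 * S \<le> \<eta> / 2"
    unfolding \<eta>1_def using \<eta> S0 by (simp add: field_simps)
  obtain h0 where h0: "h0 > 0" and h0b: "\<And>h. 0 < h \<Longrightarrow> h < h0 \<Longrightarrow>
        (\<integral>\<^sup>+y. ennreal (G y) * indicator (cbox w (w + h *\<^sub>R One)) y \<partial>lborel) \<le> ennreal (\<eta>1 * h\<^sup>2)"
    using leb[OF \<eta>1] by blast
  have "(\<lambda>n. \<Sum>k<n. cc k) \<longlonglongrightarrow> S" unfolding S_def by (rule summable_LIMSEQ[OF cc_summable])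
  moreover have "\<eta> / (2 * (B + 1)) > 0" using \<eta> B0 by simp
  ultimately obtain N where N: "\<And>n. n \<ge> N \<Longrightarrow> dist (\<Sum>k<n. cc k) S < \<eta> / (2 * (B + 1))"
    by (metis LIMSEQ_def)
  define tl where "tl = S - (\<Sum>k<N. cc k)"
  have tlsums: "(\<lambda>k. if k \<in> {..<N} then 0 else cc k) sums tl"
  proof -
    have "(\<lambda>k. cc k - (if k \<in> {..<N} then cc k else 0)) sums (S - (\<Sum>k<N. cc k))"
      unfolding S_def by (intro sums_diff summable_sums[OF cc_summable] sums_If_finite_set) auto
    moreover have "(\<lambda>k. cc k - (if k \<in> {..<N} then cc k else 0)) = (\<lambda>k. if k \<in> {..<N} then 0 else cc k)"
      by auto
    ultimately show ?thesis unfolding tl_def by simp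
  qed
  have tl0: "0 \<le> tl"
    using sums_le[of "\<lambda>_. 0" _ 0, OF _ sums_zero tlsums] cc_nonneg by auto
  have tlsmall: "tl < \<eta> / (2 * (B + 1))"
    using N[of N] tl0 unfolding tl_def by (simp add: dist_real_def)
  have Btl: "B * tl \<le> \<eta> / 2"
  proof -
    have "B * tl \<le> (B + 1) * tl" using tl0 by (simp add: mult_right_mono)
    also have "\<dots> \<le> (B + 1) * (\<eta> / (2 * (B + 1)))" using tlsmall B0 by (intro mult_left_mono) auto
    also have "\<dots> = \<eta> / 2" using B0 by (simp add: field_simps)
    finally show ?thesis .
  qed
  define \<delta> where "\<delta> = (h0 / (real N + 1))\<^sup>2"
  have \<delta>: "\<delta> > 0" unfolding \<delta>_def using h0 by simp
  show ?thesis
  proof (intro exI conjI allI impI)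
    show "\<delta> > 0" by (rule \<delta>)
    fix r :: real assume r: "0 < r \<and> r < \<delta>"
    have r0: "r > 0" using r by simp
    have sr: "sqrt r < h0 / (real N + 1)"
    proof -
      have "sqrt r < sqrt \<delta>" using r by simp
      moreover have "sqrt \<delta> = h0 / (real N + 1)" unfolding \<delta>_def using h0 by simp
      ultimately show ?thesis by simp
    qed
    define hh where "hh k = (real k + 1) * sqrt r" for k :: nat
    define a where "a k = 1 / (2 * pi * r) * exp (- (real k)\<^sup>2 / 2)" for k :: nat
    have a0: "0 \<le> a k" for k unfolding a_def using r0 by simp
    have ah: "a k * (hh k)\<^sup>2 \<le> cc k" for k
    proof -
      have hh2: "(hh k)\<^sup>2 = (real k + 1)\<^sup>2 * r" unfolding hh_def using r0 by (simp add: power_mult_distrib)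
      have "a k * (hh k)\<^sup>2 = cc k / (2 * pi)"
        unfolding hh2 a_def cc_def using r0 by (simp add: field_simps)
      also have "\<dots> \<le> cc k / 1" using cc_nonneg[of k] pi_gt3 by (intro divide_left_mono) auto
      also have "\<dots> = cc k" by simp
      finally show ?thesis .
    qed
    have pw: "ennreal (heat_kernel r y) * indicator Qd y * ennreal (G (w + y))
        \<le> (\<Sum>k. ennreal (a k) * (indicator (cbox 0 (hh k *\<^sub>R One)) y * ennreal (G (w + y))))" for y
    proof (cases "y \<in> Qd")
      case True
      obtain k where k1: "y \<in> cbox 0 (hh k *\<^sub>R One)" and k2: "heat_kernel r y \<le> a k"
        using kernel_pointwise[OF r0 True] unfolding hh_def a_def by blast
      have "ennreal (heat_kernel r y) * indicator Qd y * ennreal (G (w + y))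
          \<le> ennreal (a k) * (indicator (cbox 0 (hh k *\<^sub>R One)) y * ennreal (G (w + y)))"
        using True k1 k2 by (auto intro!: mult_right_mono ennreal_leI)
      also have "\<dots> \<le> (\<Sum>k. ennreal (a k) * (indicator (cbox 0 (hh k *\<^sub>R One)) y * ennreal (G (w + y))))"
        using sum_le_suminf[OF summableI, of "{k}" "\<lambda>k. ennreal (a k) * (indicator (cbox 0 (hh k *\<^sub>R One)) y * ennreal (G (w + y)))"]
        by simp
      finally show ?thesis .
    qed simp
    have trm: "ennreal (a k) * (\<integral>\<^sup>+y. indicator (cbox 0 (hh k *\<^sub>R One)) y * ennreal (G (w + y)) \<partial>lborel)
         \<le> ennreal (\<eta>1 * cc k + B * (if k \<in> {..<N} then 0 else cc k))" for k
    proof -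
      have hk0: "0 < hh k" unfolding hh_def using r0 by simp
      have "(\<integral>\<^sup>+y. indicator (cbox 0 (hh k *\<^sub>R One)) y * ennreal (G (w + y)) \<partial>lborel)
          \<le> ennreal ((if k \<in> {..<N} then \<eta>1 else B) * (hh k)\<^sup>2)"
      proof (cases "k \<in> {..<N}")
        case True
        have "hh k \<le> real N * sqrt r" unfolding hh_def using True r0 by (intro mult_right_mono) auto
        also have "\<dots> \<le> (real N + 1) * sqrt r" using r0 by (simp add: distrib_right)
        also have "\<dots> < h0" using sr by (simp add: field_simps)
        finally have "hh k < h0" .
        then show ?thesis using True h0b[OF hk0] by (simp add: translate_cube)
      next
        case False
        have "(\<integral>\<^sup>+y. indicator (cbox 0 (hh k *\<^sub>R One)) y * ennreal (G (w + y)) \<partial>lborel)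
            = (\<integral>\<^sup>+z. ennreal (G z) * indicator (cbox w (w + hh k *\<^sub>R One)) z \<partial>lborel)"
          by (rule translate_cube) simp
        also have "\<dots> \<le> (\<integral>\<^sup>+z. ennreal B * indicator (cbox w (w + hh k *\<^sub>R One)) z \<partial>lborel)"
          by (intro nn_integral_mono mult_right_mono) (auto intro: ennreal_leI GB)
        also have "\<dots> = ennreal (B * (hh k)\<^sup>2)"
          using hk0 B0 by (simp add: nn_integral_cmult_indicator cbox_emeasure ennreal_mult)
        finally show ?thesis using False by simp
      qed
      then have "ennreal (a k) * (\<integral>\<^sup>+y. indicator (cbox 0 (hh k *\<^sub>R One)) y * ennreal (G (w + y)) \<partial>lborel)
          \<le> ennreal (a k) * ennreal ((if k \<in> {..<N} then \<eta>1 else B) * (hh k)\<^sup>2)"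
        by (rule mult_left_mono) simp
      also have "\<dots> = ennreal ((if k \<in> {..<N} then \<eta>1 else B) * (a k * (hh k)\<^sup>2))"
        using a0[of k] by (simp add: ennreal_mult'[symmetric] mult_ac)
      also have "\<dots> \<le> ennreal ((if k \<in> {..<N} then \<eta>1 else B) * cc k)"
        using ah[of k] \<eta>1 B0 by (intro ennreal_leI mult_left_mono) auto
      also have "\<dots> \<le> ennreal (\<eta>1 * cc k + B * (if k \<in> {..<N} then 0 else cc k))"
        using \<eta>1 B0 cc_nonneg[of k] by (intro ennreal_leI) auto
      finally show ?thesis .
    qed
    have sm: "(\<lambda>k. \<eta>1 * cc k + B * (if k \<in> {..<N} then 0 else cc k)) sums (\<eta>1 * S + B * tl)"
      unfolding S_def by (intro sums_add sums_mult summable_sums[OF cc_summable] tlsums)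
    have "(\<integral>\<^sup>+y. ennreal (heat_kernel r y) * indicator Qd y * ennreal (G (w + y)) \<partial>lborel)
        \<le> (\<integral>\<^sup>+y. (\<Sum>k. ennreal (a k) * (indicator (cbox 0 (hh k *\<^sub>R One)) y * ennreal (G (w + y)))) \<partial>lborel)"
      by (rule nn_integral_mono) (rule pw)
    also have "\<dots> = (\<Sum>k. (\<integral>\<^sup>+y. ennreal (a k) * (indicator (cbox 0 (hh k *\<^sub>R One)) y * ennreal (G (w + y))) \<partial>lborel))"
      by (rule nn_integral_suminf) measurable
    also have "\<dots> = (\<Sum>k. ennreal (a k) * (\<integral>\<^sup>+y. indicator (cbox 0 (hh k *\<^sub>R One)) y * ennreal (G (w + y)) \<partial>lborel))"
      by (subst nn_integral_cmult) auto
    also have "\<dots> \<le> (\<Sum>k. ennreal (\<eta>1 * cc k + B * (if k \<in> {..<N} then 0 else cc k)))"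
      by (intro suminf_le summableI) (rule trm)
    also have "\<dots> = ennreal (\<eta>1 * S + B * tl)"
    proof -
      have su: "summable (\<lambda>k. \<eta>1 * cc k + B * (if k \<in> {..<N} then 0 else cc k))" using sums_summable[OF sm] .
      have "(\<Sum>k. ennreal (\<eta>1 * cc k + B * (if k \<in> {..<N} then 0 else cc k))) = ennreal (\<Sum>k. \<eta>1 * cc k + B * (if k \<in> {..<N} then 0 else cc k))"
        by (rule suminf_ennreal2[OF _ su]) (use \<eta>1 B0 cc_nonneg in auto)
      also have "(\<Sum>k. \<eta>1 * cc k + B * (if k \<in> {..<N} then 0 else cc k)) = \<eta>1 * S + B * tl"
        using sums_unique[OF sm] by simp
      finally show ?thesis .
    qed
    also have "\<dots> \<le> ennreal \<eta>"
      using \<eta>1S Btl by (intro ennreal_leI) simp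
    finally show "(\<integral>\<^sup>+y. ennreal (heat_kernel r y) * indicator Qd y * ennreal (G (w + y)) \<partial>lborel) \<le> ennreal \<eta>" .
  qed
qed

definition SC :: "(real^2 \<Rightarrow> real) set" where "SC = PiE Basis (\<lambda>_. {-1, 1})"

lemma SC_finite: "finite SC" unfolding SC_def by (intro finite_PiE) auto

lemma SC_pm: "c \<in> SC \<Longrightarrow> j \<in> Basis \<Longrightarrow> c j = 1 \<or> c j = -1"
  unfolding SC_def by auto

lemma SC_sq: "c \<in> SC \<Longrightarrow> j \<in> Basis \<Longrightarrow> c j * c j = 1"
  using SC_pm[of c j] by auto

lemma flipc_inner: "j \<in> Basis \<Longrightarrow> flipc c y \<bullet> j = c j * (y \<bullet> j)"
  unfolding flipc_def by (simp add: inner_sum_left_Basis)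

lemma flipc_add: "flipc c (a + b) = flipc c a + flipc c b"
  unfolding flipc_def by (simp add: inner_add_left distrib_left scaleR_add_left sum.distrib)

lemma flipc_flipc: assumes "c \<in> SC" shows "flipc c (flipc c y) = y"
proof -
  have "flipc c (flipc c y) = (\<Sum>j\<in>Basis. (c j * (c j * (y \<bullet> j))) *\<^sub>R j)"
    unfolding flipc_def[of c "flipc c y"] by (simp add: flipc_inner)
  also have "\<dots> = (\<Sum>j\<in>Basis. (y \<bullet> j) *\<^sub>R j)"
    by (rule sum.cong) (use SC_sq[OF assms] in \<open>auto simp: mult.assoc[symmetric]\<close>)
  also have "\<dots> = y" by (rule euclidean_representation)
  finally show ?thesis .
qed

lemma flipc_norm: assumes "c \<in> SC" shows "norm (flipc c y) = norm y"
proof -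
  have "(norm (flipc c y))\<^sup>2 = (norm y)\<^sup>2"
    unfolding power2_norm_eq_inner
    apply (subst (1 2) euclidean_inner)
    by (rule sum.cong) (use SC_sq[OF assms] in \<open>auto simp: flipc_inner mult_ac\<close>)
  then show ?thesis by (simp add: power2_eq_iff_nonneg)
qed

lemma flipc_null:
  assumes c: "c \<in> SC" and N: "N \<in> null_sets lborel"
  shows "flipc c -` N \<in> null_sets lborel"
proof -
  have d: "distr lborel borel (\<lambda>y. 0 + flipc c y) = (lborel :: (real^2) measure)"
    by (rule distr_affine_flipc) (rule SC_pm[OF c])
  have d': "distr lborel borel (flipc c) = (lborel :: (real^2) measure)" using d by simp
  have Ns: "N \<in> sets borel" using N by (simp add: null_sets_def)
  have "emeasure lborel (flipc c -` N) = emeasure (distr lborel borel (flipc c)) N"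
    using Ns by (subst emeasure_distr) auto
  also have "\<dots> = 0" using N by (simp add: d' null_sets_def)
  moreover have "flipc c -` N \<in> sets borel"
    using measurable_sets[OF flipc_meas Ns] by simp
  ultimately show ?thesis by (auto simp: null_sets_def)
qed

lemma SC_cover: "\<exists>c\<in>SC. flipc c y \<in> Qd"
proof -
  define c where "c = restrict (\<lambda>j. if 0 \<le> y \<bullet> j then 1 else (-1::real)) Basis"
  have "c \<in> SC" unfolding SC_def c_def by auto
  moreover have "flipc c y \<in> Qd" unfolding Qd_def by (auto simp: flipc_inner c_def)
  ultimately show ?thesis by blast
qed

lemma good_ae:
  fixes \<psi> :: "real^2 \<Rightarrow> real"
  assumes meas[measurable]: "\<psi> \<in> borel_measurable borel" and M: "\<And>z. \<bar>\<psi> z\<bar> \<le> M"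
  shows "AE x in lborel. \<forall>\<eta>>0. \<exists>\<delta>>0. \<forall>r. 0 < r \<and> r < \<delta> \<longrightarrow>
            (\<integral>z. heat_kernel r (z - x) * \<bar>\<psi> z - \<psi> x\<bar> \<partial>lborel) \<le> \<eta>"
proof -
  have M0: "0 \<le> M" using M[of 0] by simp
  have "\<exists>N. N \<in> null_sets lborel \<and> (\<forall>w \<eta>. w \<notin> N \<longrightarrow> \<eta> > 0 \<longrightarrow> (\<exists>h0>0. \<forall>h. 0 < h \<and> h < h0 \<longrightarrow>
        (\<integral>\<^sup>+y. ennreal \<bar>\<psi> (flipc c y) - \<psi> (flipc c w)\<bar> * indicator (cbox w (w + h *\<^sub>R One)) y \<partial>lborel) \<le> ennreal (\<eta> * h\<^sup>2)))" for c
  proof -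
    obtain N where "N \<in> null_sets lborel"
      "\<And>w \<eta>. w \<notin> N \<Longrightarrow> \<eta> > 0 \<Longrightarrow> \<exists>h0>0. \<forall>h. 0 < h \<and> h < h0 \<longrightarrow>
        (\<integral>\<^sup>+y. ennreal \<bar>\<psi> (flipc c y) - \<psi> (flipc c w)\<bar> * indicator (cbox w (w + h *\<^sub>R One)) y \<partial>lborel) \<le> ennreal (\<eta> * h\<^sup>2)"
      by (rule corner_leb[of "\<lambda>y. \<psi> (flipc c y)" M]) (auto simp: M)
    then show ?thesis by blast
  qed
  then have "\<forall>c. \<exists>N. N \<in> null_sets lborel \<and> (\<forall>w \<eta>. w \<notin> N \<longrightarrow> \<eta> > 0 \<longrightarrow> (\<exists>h0>0. \<forall>h. 0 < h \<and> h < h0 \<longrightarrow>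
        (\<integral>\<^sup>+y. ennreal \<bar>\<psi> (flipc c y) - \<psi> (flipc c w)\<bar> * indicator (cbox w (w + h *\<^sub>R One)) y \<partial>lborel) \<le> ennreal (\<eta> * h\<^sup>2)))"
    by blast
  from choice[OF this] obtain Nf where NfP: "\<forall>c. Nf c \<in> null_sets lborel \<and> (\<forall>w \<eta>. w \<notin> Nf c \<longrightarrow> \<eta> > 0 \<longrightarrow> (\<exists>h0>0. \<forall>h. 0 < h \<and> h < h0 \<longrightarrow>
        (\<integral>\<^sup>+y. ennreal \<bar>\<psi> (flipc c y) - \<psi> (flipc c w)\<bar> * indicator (cbox w (w + h *\<^sub>R One)) y \<partial>lborel) \<le> ennreal (\<eta> * h\<^sup>2)))"
    by blast
  have Nf: "\<And>c. Nf c \<in> null_sets lborel" using NfP by blast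
  have Nf2: "\<And>c w \<eta>. w \<notin> Nf c \<Longrightarrow> \<eta> > 0 \<Longrightarrow> \<exists>h0>0. \<forall>h. 0 < h \<and> h < h0 \<longrightarrow>
        (\<integral>\<^sup>+y. ennreal \<bar>\<psi> (flipc c y) - \<psi> (flipc c w)\<bar> * indicator (cbox w (w + h *\<^sub>R One)) y \<partial>lborel) \<le> ennreal (\<eta> * h\<^sup>2)"
    using NfP by blast
  define Nall where "Nall = (\<Union>c\<in>SC. flipc c -` Nf c)"
  have Nall: "Nall \<in> null_sets lborel"
    unfolding Nall_def by (intro null_sets_UN' countable_finite SC_finite flipc_null Nf)
  have SCne: "SC \<noteq> {}" using SC_cover[of 0] by auto
  have cardSC: "card SC > 0" using SC_finite SCne by (simp add: card_gt_0_iff)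
  show ?thesis
  proof (rule AE_I'[OF Nall], rule subsetI)
    fix x assume "x \<in> {x \<in> space lborel. \<not> (\<forall>\<eta>>0. \<exists>\<delta>>0. \<forall>r. 0 < r \<and> r < \<delta> \<longrightarrow>
            (\<integral>z. heat_kernel r (z - x) * \<bar>\<psi> z - \<psi> x\<bar> \<partial>lborel) \<le> \<eta>)}"
    then have nx: "\<not> (\<forall>\<eta>>0. \<exists>\<delta>>0. \<forall>r. 0 < r \<and> r < \<delta> \<longrightarrow>
            (\<integral>z. heat_kernel r (z - x) * \<bar>\<psi> z - \<psi> x\<bar> \<partial>lborel) \<le> \<eta>)" by blast
    show "x \<in> Nall"
    proof (rule ccontr)
      assume xN: "x \<notin> Nall"
      have good: "\<forall>\<eta>>0. \<exists>\<delta>>0. \<forall>r. 0 < r \<and> r < \<delta> \<longrightarrow>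
            (\<integral>z. heat_kernel r (z - x) * \<bar>\<psi> z - \<psi> x\<bar> \<partial>lborel) \<le> \<eta>"
      proof (intro allI impI)
        fix \<eta> :: real assume \<eta>: "\<eta> > 0"
        define G where "G c y = \<bar>\<psi> (flipc c y) - \<psi> x\<bar>" for c y
        define I where "I c r = (\<integral>\<^sup>+y. ennreal (heat_kernel r y) * indicator Qd y * ennreal (G c (flipc c x + y)) \<partial>lborel)" for c r
        have "\<exists>\<delta>>0. \<forall>r. 0 < r \<and> r < \<delta> \<longrightarrow> I c r \<le> ennreal (\<eta> / card SC)" if c: "c \<in> SC" for c
        proof -
          have w: "flipc c x \<notin> Nf c" using xN c unfolding Nall_def by auto
          have fx: "\<psi> (flipc c (flipc c x)) = \<psi> x" using flipc_flipc[OF c] by simp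
          show ?thesis unfolding I_def
          proof (rule kernel_bound[where B="2 * M"])
            show "G c \<in> borel_measurable borel" unfolding G_def by measurable
            show "0 \<le> G c y" for y unfolding G_def by simp
            show "G c y \<le> 2 * M" for y unfolding G_def using M[of x] M[of "flipc c y"] by linarith
            show "\<eta> / real (card SC) > 0" using \<eta> cardSC by simp
            fix \<eta>' :: real assume "\<eta>' > 0"
            from Nf2[OF w this] show "\<exists>h0>0. \<forall>h. 0 < h \<and> h < h0 \<longrightarrow>
              (\<integral>\<^sup>+y. ennreal (G c y) * indicator (cbox (flipc c x) (flipc c x + h *\<^sub>R One)) y \<partial>lborel) \<le> ennreal (\<eta>' * h\<^sup>2)"
              unfolding G_def fx .
          qed
        qed
        then have "\<forall>c\<in>SC. \<exists>\<delta>. \<delta> > 0 \<and> (\<forall>r. 0 < r \<and> r < \<delta> \<longrightarrow> I c r \<le> ennreal (\<eta> / card SC))"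
          by blast
        from finite_set_choice[OF SC_finite this] obtain df where
          dfP: "\<forall>c\<in>SC. df c > 0 \<and> (\<forall>r. 0 < r \<and> r < df c \<longrightarrow> I c r \<le> ennreal (\<eta> / card SC))"
          by blast
        have df: "\<And>c. c \<in> SC \<Longrightarrow> df c > 0"
          "\<And>c r. c \<in> SC \<Longrightarrow> 0 < r \<Longrightarrow> r < df c \<Longrightarrow> I c r \<le> ennreal (\<eta> / card SC)"
          using dfP by blast+
        define \<delta> where "\<delta> = Min (df ` SC)"
        have \<delta>: "\<delta> > 0" unfolding \<delta>_def using SC_finite SCne df(1) by auto
        show "\<exists>\<delta>>0. \<forall>r. 0 < r \<and> r < \<delta> \<longrightarrow> (\<integral>z. heat_kernel r (z - x) * \<bar>\<psi> z - \<psi> x\<bar> \<partial>lborel) \<le> \<eta>"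
        proof (intro exI conjI allI impI)
          show "\<delta> > 0" by (rule \<delta>)
          fix r :: real assume r: "0 < r \<and> r < \<delta>"
          have rc: "r < df c" if "c \<in> SC" for c
          proof -
            have "\<delta> \<le> df c" unfolding \<delta>_def using SC_finite that by (intro Min_le) auto
            then show ?thesis using r by linarith
          qed
          have int: "integrable lborel (\<lambda>z. heat_kernel r (z - x) * \<bar>\<psi> z - \<psi> x\<bar>)"
          proof (rule hk_g_integrable[where B="2*M"])
            show "\<bar>\<bar>\<psi> z - \<psi> x\<bar>\<bar> \<le> 2 * M" for z using M[of z] M[of x] by linarith
          qed (use r in auto)
          have eqc: "(\<integral>\<^sup>+z. ennreal (heat_kernel r (z - x)) * indicator Qd (flipc c (z - x)) * ennreal \<bar>\<psi> z - \<psi> x\<bar> \<partial>lborel) = I c r"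
            if c: "c \<in> SC" for c
          proof -
            have "(\<integral>\<^sup>+z. ennreal (heat_kernel r (z - x)) * indicator Qd (flipc c (z - x)) * ennreal \<bar>\<psi> z - \<psi> x\<bar> \<partial>lborel)
               = (\<integral>\<^sup>+y. ennreal (heat_kernel r ((x + flipc c y) - x)) * indicator Qd (flipc c ((x + flipc c y) - x)) * ennreal \<bar>\<psi> (x + flipc c y) - \<psi> x\<bar> \<partial>lborel)"
              by (rule nn_integral_affine_flipc[symmetric]) (use SC_pm[OF c] in auto)
            also have "\<dots> = I c r"
              unfolding I_def G_def
              by (rule nn_integral_cong) (simp add: flipc_flipc[OF c] flipc_add heat_kernel_def flipc_norm[OF c])
            finally show ?thesis .
          qed
          have "ennreal (\<integral>z. heat_kernel r (z - x) * \<bar>\<psi> z - \<psi> x\<bar> \<partial>lborel)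
              = (\<integral>\<^sup>+z. ennreal (heat_kernel r (z - x) * \<bar>\<psi> z - \<psi> x\<bar>) \<partial>lborel)"
            by (rule nn_integral_eq_integral[OF int, symmetric]) (use r in \<open>auto simp: hk_nonneg\<close>)
          also have "\<dots> \<le> (\<integral>\<^sup>+z. (\<Sum>c\<in>SC. ennreal (heat_kernel r (z - x)) * indicator Qd (flipc c (z - x)) * ennreal \<bar>\<psi> z - \<psi> x\<bar>) \<partial>lborel)"
          proof (rule nn_integral_mono)
            fix z
            obtain c0 where c0: "c0 \<in> SC" "flipc c0 (z - x) \<in> Qd" using SC_cover by blast
            have "ennreal (heat_kernel r (z - x) * \<bar>\<psi> z - \<psi> x\<bar>)
                = ennreal (heat_kernel r (z - x)) * indicator Qd (flipc c0 (z - x)) * ennreal \<bar>\<psi> z - \<psi> x\<bar>"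
              using c0 r by (simp add: ennreal_mult hk_nonneg)
            also have "\<dots> \<le> (\<Sum>c\<in>SC. ennreal (heat_kernel r (z - x)) * indicator Qd (flipc c (z - x)) * ennreal \<bar>\<psi> z - \<psi> x\<bar>)"
              by (rule member_le_sum[OF c0(1) _ SC_finite]) simp
            finally show "ennreal (heat_kernel r (z - x) * \<bar>\<psi> z - \<psi> x\<bar>)
                \<le> (\<Sum>c\<in>SC. ennreal (heat_kernel r (z - x)) * indicator Qd (flipc c (z - x)) * ennreal \<bar>\<psi> z - \<psi> x\<bar>)" .
          qed
          also have "\<dots> = (\<Sum>c\<in>SC. (\<integral>\<^sup>+z. ennreal (heat_kernel r (z - x)) * indicator Qd (flipc c (z - x)) * ennreal \<bar>\<psi> z - \<psi> x\<bar> \<partial>lborel))"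
            by (rule nn_integral_sum) measurable
          also have "\<dots> = (\<Sum>c\<in>SC. I c r)"
            by (rule sum.cong) (auto simp: eqc)
          also have "\<dots> \<le> (\<Sum>c\<in>SC. ennreal (\<eta> / card SC))"
            by (rule sum_mono) (use r df(2) rc in auto)
          also have "\<dots> = ennreal \<eta>"
            using cardSC \<eta> by (simp add: ennreal_of_nat_eq_real_of_nat ennreal_mult'[symmetric])
          finally show "(\<integral>z. heat_kernel r (z - x) * \<bar>\<psi> z - \<psi> x\<bar> \<partial>lborel) \<le> \<eta>"
            using \<eta> by (simp add: ennreal_le_iff)
        qed
      qed
      then show False using nx by blast
    qed
  qed
qed

lemma diff_bound:
  fixes \<psi> :: "real^2 \<Rightarrow> real"
  assumes meas[measurable]: "\<psi> \<in> borel_measurable borel" and M: "\<And>z. \<bar>\<psi> z\<bar> \<le> M" and r: "r > 0"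
  shows "\<bar>(\<integral>z. heat_kernel r (z - x) * \<psi> z \<partial>lborel) - \<psi> x\<bar> \<le> (\<integral>z. heat_kernel r (z - x) * \<bar>\<psi> z - \<psi> x\<bar> \<partial>lborel)"
    "(\<integral>z. heat_kernel r (z - x) * \<bar>\<psi> z - \<psi> x\<bar> \<partial>lborel) \<le> 2 * M"
proof -
  have B2: "\<bar>\<psi> z - \<psi> x\<bar> \<le> 2 * M" for z using M[of z] M[of x] by linarith
  have i1: "integrable lborel (\<lambda>z. heat_kernel r (z - x) * \<psi> z)" by (rule hk_g_integrable[OF r meas M])
  have i2: "integrable lborel (\<lambda>z. heat_kernel r (z - x) * \<psi> x)"
    using hk_integrable[OF r, of x] by simp
  have "(\<integral>z. heat_kernel r (z - x) * \<psi> z \<partial>lborel) - \<psi> x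
     = (\<integral>z. heat_kernel r (z - x) * \<psi> z \<partial>lborel) - (\<integral>z. heat_kernel r (z - x) * \<psi> x \<partial>lborel)"
    using hk_integral[OF r, of x] by simp
  also have "\<dots> = (\<integral>z. heat_kernel r (z - x) * \<psi> z - heat_kernel r (z - x) * \<psi> x \<partial>lborel)"
    by (rule Bochner_Integration.integral_diff[OF i1 i2, symmetric])
  also have "\<dots> = (\<integral>z. heat_kernel r (z - x) * (\<psi> z - \<psi> x) \<partial>lborel)"
    by (simp add: right_diff_distrib)
  finally have eq: "(\<integral>z. heat_kernel r (z - x) * \<psi> z \<partial>lborel) - \<psi> x = (\<integral>z. heat_kernel r (z - x) * (\<psi> z - \<psi> x) \<partial>lborel)" .
  have "\<bar>\<integral>z. heat_kernel r (z - x) * (\<psi> z - \<psi> x) \<partial>lborel\<bar> \<le> (\<integral>z. \<bar>heat_kernel r (z - x) * (\<psi> z - \<psi> x)\<bar> \<partial>lborel)"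
    by (rule integral_abs_bound)
  also have "\<dots> = (\<integral>z. heat_kernel r (z - x) * \<bar>\<psi> z - \<psi> x\<bar> \<partial>lborel)"
    using r by (simp add: abs_mult hk_nonneg)
  finally show "\<bar>(\<integral>z. heat_kernel r (z - x) * \<psi> z \<partial>lborel) - \<psi> x\<bar> \<le> (\<integral>z. heat_kernel r (z - x) * \<bar>\<psi> z - \<psi> x\<bar> \<partial>lborel)"
    using eq by simp
  have "\<bar>\<integral>z. heat_kernel r (z - x) * \<bar>\<psi> z - \<psi> x\<bar> \<partial>lborel\<bar> \<le> 2 * M"
    by (rule hk_g_bound[OF r]) (use B2 in auto)
  then show "(\<integral>z. heat_kernel r (z - x) * \<bar>\<psi> z - \<psi> x\<bar> \<partial>lborel) \<le> 2 * M" by simp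
qed

lemma inv_ln_0: "((\<lambda>e::real. 1 / ln e) \<longlongrightarrow> 0) (at_right 0)"
proof -
  have "filterlim ln at_bot (at_right (0::real))" by (rule ln_at_0)
  then have "filterlim ln at_infinity (at_right (0::real))"
    using at_bot_le_at_infinity filterlim_mono by blast
  then show ?thesis using tendsto_inverse_0 by (simp add: divide_inverse filterlim_compose[OF tendsto_inverse_0])
qed

lemma part2_x:
  fixes \<psi> :: "real^2 \<Rightarrow> real" and t :: real and x :: "real^2"
  assumes meas[measurable]: "\<psi> \<in> borel_measurable borel" and M: "\<And>z. \<bar>\<psi> z\<bar> \<le> M" and t: "t > 0"
    and good: "\<forall>\<eta>>0. \<exists>\<delta>>0. \<forall>r. 0 < r \<and> r < \<delta> \<longrightarrow>
            (\<integral>z. heat_kernel r (z - x) * \<bar>\<psi> z - \<psi> x\<bar> \<partial>lborel) \<le> \<eta>"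
  shows "((\<lambda>\<epsilon>. (-1 / ln \<epsilon>) * (\<integral>z. (\<integral>s\<in>{0..t}. 1 / (s + \<epsilon>) *
                    heat_kernel ((s + \<epsilon>) / 2) (z - x) * \<psi> z \<partial>lborel) \<partial>lborel))
                \<longlongrightarrow> \<psi> x) (at_right 0)"
proof -
  have M0: "0 \<le> M" using M[of 0] by simp
  define P where "P e s = (\<integral>z. heat_kernel ((s + e) / 2) (z - x) * \<psi> z \<partial>lborel)" for e s
  define D where "D r = (\<integral>z. heat_kernel r (z - x) * \<bar>\<psi> z - \<psi> x\<bar> \<partial>lborel)" for r
  define L where "L e = ln (t + e) - ln e" for e
  define E where "E e = (\<integral>s\<in>{0..t}. 1 / (s + e) * (P e s - \<psi> x) \<partial>lborel)" for e
  have Pm[measurable]: "P e \<in> borel_measurable borel" for e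
    unfolding P_def by measurable
  have Pint: "set_integrable lborel {0..t} (\<lambda>s. 1 / (s + e) * P e s)" if e: "e > 0" for e
  proof (rule set_int_bound(1))
    show "set_integrable lborel {0..t} (\<lambda>s. M * (1 / (s + e)))"
      using k_integrable[OF e] by (rule set_integrable_mult_right)
    fix s assume s: "s \<in> {0..t}"
    have "\<bar>1 / (s + e) * P e s\<bar> = (1 / (s + e)) * \<bar>P e s\<bar>" using s e by (simp add: abs_mult)
    also have "\<dots> \<le> (1 / (s + e)) * M"
      unfolding P_def using s e by (intro mult_left_mono hk_g_bound[OF _ meas M]) auto
    finally show "\<bar>1 / (s + e) * P e s\<bar> \<le> M * (1 / (s + e))" by (simp add: mult.commute)
  qed measurable
  have decomp: "(-1 / ln e) * (\<integral>z. (\<integral>s\<in>{0..t}. 1 / (s + e) * heat_kernel ((s + e) / 2) (z - x) * \<psi> z \<partial>lborel) \<partial>lborel)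
      = (-1 / ln e) * E e + \<psi> x * (1 - ln (t + e) * (1 / ln e))" if e: "0 < e" "e < 1" for e
  proof -
    have "(\<integral>z. (\<integral>s\<in>{0..t}. 1 / (s + e) * heat_kernel ((s + e) / 2) (z - x) * \<psi> z \<partial>lborel) \<partial>lborel)
        = (\<integral>s\<in>{0..t}. 1 / (s + e) * P e s \<partial>lborel)"
      unfolding P_def by (rule I_eq[OF meas M e(1)]) (use e in auto)
    also have "\<dots> = E e + \<psi> x * L e"
    proof -
      have ki: "set_integrable lborel {0..t} (\<lambda>s. \<psi> x * (1 / (s + e)))"
        using k_integrable[OF e(1)] by (rule set_integrable_mult_right)
      have "E e = (\<integral>s\<in>{0..t}. 1 / (s + e) * P e s - \<psi> x * (1 / (s + e)) \<partial>lborel)"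
        unfolding E_def by (simp add: right_diff_distrib mult.commute)
      also have "\<dots> = (\<integral>s\<in>{0..t}. 1 / (s + e) * P e s \<partial>lborel) - (\<integral>s\<in>{0..t}. \<psi> x * (1 / (s + e)) \<partial>lborel)"
        by (rule set_integral_diff(2)[OF Pint[OF e(1)] ki])
      also have "(\<integral>s\<in>{0..t}. \<psi> x * (1 / (s + e)) \<partial>lborel) = \<psi> x * L e"
        unfolding L_def using k_integral[OF e(1)] t by (subst set_integral_mult_right) simp
      finally show ?thesis by simp
    qed
    finally have eqJ: "(\<integral>z. (\<integral>s\<in>{0..t}. 1 / (s + e) * heat_kernel ((s + e) / 2) (z - x) * \<psi> z \<partial>lborel) \<partial>lborel) = E e + \<psi> x * L e" .
    have "ln e \<noteq> 0" using e by simp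
    then show ?thesis unfolding eqJ L_def by (simp add: field_simps)
  qed
  have lim1: "((\<lambda>e. 1 - ln (t + e) * (1 / ln e)) \<longlongrightarrow> 1 - ln (t + 0) * 0) (at_right 0)"
    by (intro tendsto_intros inv_ln_0) (use t in auto)
  have W: "((\<lambda>e. (-1 / ln e) * E e) \<longlongrightarrow> 0) (at_right 0)"
  proof (rule tendstoI)
    fix \<eta> :: real assume \<eta>: "\<eta> > 0"
    define \<eta>' where "\<eta>' = \<eta> / 4"
    have \<eta>': "\<eta>' > 0" unfolding \<eta>'_def using \<eta> by simp
    obtain \<delta> where \<delta>: "\<delta> > 0" and D\<delta>: "\<And>r. 0 < r \<Longrightarrow> r < \<delta> \<Longrightarrow> D r \<le> \<eta>'"
      using good \<eta>' unfolding D_def by blast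
    define K where "K = t * (2 * M / \<delta>)"
    have K0: "0 \<le> K" unfolding K_def using t M0 \<delta> by simp
    have Ebound: "\<bar>E e\<bar> \<le> \<eta>' * L e + K" if e: "0 < e" "e < \<delta>" for e
    proof -
      have "\<bar>E e\<bar> \<le> (\<integral>s\<in>{0..t}. \<eta>' * (1 / (s + e)) + 2 * M / \<delta> \<partial>lborel)"
        unfolding E_def
      proof (rule set_int_bound(2))
        show "set_integrable lborel {0..t} (\<lambda>s. \<eta>' * (1 / (s + e)) + 2 * M / \<delta>)"
          by (intro set_integral_add(1) set_integrable_mult_right k_integrable const_integrable e)
        fix s assume s: "s \<in> {0..t}"
        have r: "(s + e) / 2 > 0" using s e by auto
        have "\<bar>1 / (s + e) * (P e s - \<psi> x)\<bar> = (1 / (s + e)) * \<bar>P e s - \<psi> x\<bar>" using s e by (simp add: abs_mult)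
        also have "\<dots> \<le> (1 / (s + e)) * D ((s + e) / 2)"
          unfolding P_def D_def using s e by (intro mult_left_mono diff_bound(1)[OF meas M r]) auto
        also have "\<dots> \<le> \<eta>' * (1 / (s + e)) + 2 * M / \<delta>"
        proof (cases "s < \<delta>")
          case True
          then have "D ((s + e) / 2) \<le> \<eta>'" using e r by (intro D\<delta>) auto
          then have "(1 / (s + e)) * D ((s + e) / 2) \<le> (1 / (s + e)) * \<eta>'" using s e by (intro mult_left_mono) auto
          moreover have "0 \<le> 2 * M / \<delta>" using M0 \<delta> by simp
          ultimately show ?thesis by (simp add: mult.commute)
        next
          case False
          have "D ((s + e) / 2) \<le> 2 * M" unfolding D_def by (rule diff_bound(2)[OF meas M r])
          moreover have "0 \<le> D ((s + e) / 2)" unfolding D_def using r by (auto intro!: integral_nonneg_AE simp: hk_nonneg)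
          moreover have "1 / (s + e) \<le> 1 / \<delta>" using False e \<delta> by (intro divide_left_mono) auto
          moreover have "0 \<le> 1 / (s + e)" using s e by auto
          ultimately have "(1 / (s + e)) * D ((s + e) / 2) \<le> (1 / \<delta>) * (2 * M)"
            using \<delta> by (intro mult_mono) auto
          moreover have "0 \<le> \<eta>' * (1 / (s + e))" using \<eta>' s e by auto
          ultimately show ?thesis by simp
        qed
        finally show "\<bar>1 / (s + e) * (P e s - \<psi> x)\<bar> \<le> \<eta>' * (1 / (s + e)) + 2 * M / \<delta>" .
      qed measurable
      also have "\<dots> = \<eta>' * L e + K"
      proof -
        have "(\<integral>s\<in>{0..t}. \<eta>' * (1 / (s + e)) + 2 * M / \<delta> \<partial>lborel)
            = (\<integral>s\<in>{0..t}. \<eta>' * (1 / (s + e)) \<partial>lborel) + (\<integral>s\<in>{0..t}. 2 * M / \<delta> \<partial>lborel)"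
          by (intro set_integral_add(2) set_integrable_mult_right k_integrable const_integrable e)
        also have "(\<integral>s\<in>{0..t}. \<eta>' * (1 / (s + e)) \<partial>lborel) = \<eta>' * L e"
          unfolding L_def using k_integral[OF e(1)] t by (subst set_integral_mult_right) simp
        also have "(\<integral>s\<in>{0..t}. 2 * M / \<delta> \<partial>lborel) = K"
          unfolding K_def using t by (simp add: const_integral)
        finally show ?thesis .
      qed
      finally show ?thesis .
    qed
    have ev1: "eventually (\<lambda>e. 1 - ln (t + e) * (1 / ln e) < 2) (at_right 0)"
      using order_tendstoD(2)[OF lim1, of 2] by simp
    have ev2: "eventually (\<lambda>e. K * (1 / ln e) > - \<eta>') (at_right 0)"
      using order_tendstoD(1)[OF tendsto_mult_right_zero[OF inv_ln_0, of K]] \<eta>' by simp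
    have ev3: "eventually (\<lambda>e. e < min \<delta> 1) (at_right 0)"
      using order_tendstoD(2)[OF tendsto_ident_at, of 0 "min \<delta> 1" "{0<..}"] \<delta> by simp
    show "eventually (\<lambda>e. dist ((-1 / ln e) * E e) 0 < \<eta>) (at_right 0)"
      using ev1 ev2 ev3 eventually_at_right_less[of "0::real"]
    proof eventually_elim
      case (elim e)
      then have e: "0 < e" "e < \<delta>" "e < 1" by auto
      have lnneg: "ln e < 0" using e by simp
      have "dist ((-1 / ln e) * E e) 0 = \<bar>E e\<bar> * (-(1 / ln e))"
        using lnneg by (simp add: abs_mult abs_div dist_real_def)
      also have "\<dots> \<le> (\<eta>' * L e + K) * (-(1 / ln e))"
        using Ebound[OF e(1,2)] lnneg by (intro mult_right_mono) (auto simp: divide_neg_pos)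
      also have "\<dots> = \<eta>' * (1 - ln (t + e) * (1 / ln e)) - K * (1 / ln e)"
        unfolding L_def using lnneg by (simp add: field_simps)
      also have "\<dots> < \<eta>' * 2 + \<eta>'"
      proof -
        have "\<eta>' * (1 - ln (t + e) * (1 / ln e)) < \<eta>' * 2"
          using elim \<eta>' by (intro mult_strict_left_mono) auto
        then show ?thesis using elim by linarith
      qed
      also have "\<dots> < \<eta>" unfolding \<eta>'_def using \<eta> by simp
      finally show ?case .
    qed
  qed
  have "((\<lambda>e. (-1 / ln e) * E e + \<psi> x * (1 - ln (t + e) * (1 / ln e))) \<longlongrightarrow> 0 + \<psi> x * (1 - ln (t + 0) * 0)) (at_right 0)"
    by (intro tendsto_add W tendsto_mult tendsto_const lim1)
  then have "((\<lambda>e. (-1 / ln e) * E e + \<psi> x * (1 - ln (t + e) * (1 / ln e))) \<longlongrightarrow> \<psi> x) (at_right 0)"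
    by simp
  moreover have "eventually (\<lambda>e. (-1 / ln e) * E e + \<psi> x * (1 - ln (t + e) * (1 / ln e)) =
      (-1 / ln e) * (\<integral>z. (\<integral>s\<in>{0..t}. 1 / (s + e) * heat_kernel ((s + e) / 2) (z - x) * \<psi> z \<partial>lborel) \<partial>lborel)) (at_right 0)"
  proof -
    have ev4: "eventually (\<lambda>e. e < (1::real)) (at_right 0)"
      using order_tendstoD(2)[OF tendsto_ident_at, of "0::real" "1::real" "{0<..}"] by simp
    show ?thesis using eventually_at_right_less[of "0::real"] ev4
      by eventually_elim (use decomp in auto)
  qed
  ultimately show ?thesis by (rule Lim_transform_eventually)
qed

theorem lemma3p15:
  fixes \<psi> :: "real^2 \<Rightarrow> real" and T :: real
  assumes meas: "\<psi> \<in> borel_measurable borel"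
    and bdd: "bounded (range \<psi>)"
    and T: "T > 0"
  shows "(\<forall>t. 0 < t \<and> t < T \<longrightarrow>
            (\<exists>C. \<forall>x::real^2. \<forall>\<epsilon>::real. 0 < \<epsilon> \<and> \<epsilon> < 1/2 \<longrightarrow>
               \<bar>(-1 / ln \<epsilon>) * (\<integral>z. (\<integral>s\<in>{0..t}. 1 / (s + \<epsilon>) *
                    heat_kernel ((s + 2 * \<epsilon>) / 2) (z - x) * \<psi> z \<partial>lborel) \<partial>lborel)\<bar> \<le> C))
       \<and> (\<forall>t. 0 < t \<and> t \<le> T \<longrightarrow>
            (AE x in lborel.
               ((\<lambda>\<epsilon>. (-1 / ln \<epsilon>) * (\<integral>z. (\<integral>s\<in>{0..t}. 1 / (s + \<epsilon>) *
                    heat_kernel ((s + \<epsilon>) / 2) (z - x) * \<psi> z \<partial>lborel) \<partial>lborel))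
                \<longlongrightarrow> \<psi> x) (at_right 0)))"
proof -
  obtain M where M: "\<And>z. \<bar>\<psi> z\<bar> \<le> M"
    using bdd unfolding bounded_iff by auto
  show ?thesis
  proof (intro conjI allI impI)
    fix t :: real assume t: "0 < t \<and> t < T"
    show "\<exists>C. \<forall>x::real^2. \<forall>\<epsilon>::real. 0 < \<epsilon> \<and> \<epsilon> < 1/2 \<longrightarrow>
               \<bar>(-1 / ln \<epsilon>) * (\<integral>z. (\<integral>s\<in>{0..t}. 1 / (s + \<epsilon>) *
                    heat_kernel ((s + 2 * \<epsilon>) / 2) (z - x) * \<psi> z \<partial>lborel) \<partial>lborel)\<bar> \<le> C"
      by (rule part1[OF meas M]) (use t in auto)
  next
    fix t :: real assume t: "0 < t \<and> t \<le> T"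
    show "AE x in lborel.
               ((\<lambda>\<epsilon>. (-1 / ln \<epsilon>) * (\<integral>z. (\<integral>s\<in>{0..t}. 1 / (s + \<epsilon>) *
                    heat_kernel ((s + \<epsilon>) / 2) (z - x) * \<psi> z \<partial>lborel) \<partial>lborel))
                \<longlongrightarrow> \<psi> x) (at_right 0)"
      using good_ae[OF meas M]
    proof eventually_elim
      case (elim x)
      show ?case by (rule part2_x[OF meas M _ elim]) (use t in auto)
    qed
  qed
qed

end
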